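(* Let $m\ge 1$ and $1\le t\le 2^{m-1}$ be integers and $p=t/2^m$. For $j=1,\dots,m$ let \[ a_j(t)=\min\big(t \bmod 2^{m-j+1},\;2^{m-j+1}-(t\bmod 2^{m-j+1})\big). \] Let $f:\{0,1\}^n\to\mathbb{R}$ and $g=\mathrm{Red}(f):\{0,1\}^{mn}\to\mathbb{R}$ as defined below. For $S\subseteq\{1,\dots,mn\}$ let $S_i=S\cap\{(i-1)m+1,\dots,im\}$, let $S'=\{i:|S_i|>0\}$, $k=|S'|$, and for $i\in S'$ let $s_i=\max(S_i)-(i-1)m$. Then \[ |\hat g(S)|=\Big(\prod_{i\in S'}\frac{a_{s_i}(t)}{t}\Big)\Big(\sqrt{\tfrac{p}{1-p}}\Big)^k|\hat f(S')|. \] Furthermore, if $s_i\le\lfloor\log(1/p)\rfloor$ for every $i\in S'$, then \[ \hat g(S)=\Big(-\sqrt{\tfrac{p}{1-p}}\Big)^k(-1)^{|S|}\hat f(S'). \] Here $\hat g$ is w.r.t. the uniform measure on $\{0,1\}^{mn}$ and $\hat f$ w.r.t. $\mu_p$.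
   Context: For $0<p<1$, $\mu_p$ denotes the product measure on $\{0,1\}^n$ with $\mu_p(x)=p^{\sum_i x_i}(1-p)^{n-\sum_i x_i}$; $\mu_{1/2}$ is the uniform measure. Elements of $\{0,1\}^n$ are identified with subsets of $\{1,\dots,n\}$. For $S,T\subseteq\{1,\dots,n\}$, $u_S(T)=\big(-\sqrt{(1-p)/p}\big)^{|S\cap T|}\big(\sqrt{p/(1-p)}\big)^{|S\setminus T|}$ (for $p=1/2$, $u_S(T)=(-1)^{|S\cap T|}$); these form an orthonormal basis of $L^2(\mu_p)$ and $\hat f(S)=\mathbb{E}_{\mu_p}[fu_S]$. Reduction: write $y\in\{0,1\}^{mn}$ as $(y^1,\dots,y^n)$, $y^i=(y^i_1,\dots,y^i_m)\in\{0,1\}^m$, where $y^i_j$ is coordinate $(i-1)m+j$ of $y$. Let $\mathrm{Bin}(y^i)=\sum_{j=0}^{m-1}2^jy^i_{m-j}$, $h(y^i)=1$ if $\mathrm{Bin}(y^i)\ge 2^m-t$ and $0$ otherwise, and $g=\mathrm{Red}(f)$, $g(y)=f(h(y^1),\dots,h(y^n))$. $\log$ is base 2. *)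

theory Defs
  imports Complex_Main
begin

text \<open>Points of {0,1}^n are identified with subsets of {1..n}.\<close>

definition mu :: "real \<Rightarrow> nat \<Rightarrow> nat set \<Rightarrow> real" where
  "mu p n T = p ^ card T * (1 - p) ^ (n - card T)"

definition ubasis :: "real \<Rightarrow> nat set \<Rightarrow> nat set \<Rightarrow> real" where
  "ubasis p S T = (- sqrt ((1 - p) / p)) ^ card (S \<inter> T) * (sqrt (p / (1 - p))) ^ card (S - T)"

definition fourier :: "real \<Rightarrow> nat \<Rightarrow> (nat set \<Rightarrow> real) \<Rightarrow> nat set \<Rightarrow> real" where
  "fourier p n f S = (\<Sum>T\<in>Pow {1..n}. mu p n T * f T * ubasis p S T)"

text \<open>y^i_j is coordinate (i-1)m+j of y; Bin(y^i) = sum_{j=0}^{m-1} 2^j y^i_{m-j}.\<close>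
definition Bin :: "nat \<Rightarrow> nat set \<Rightarrow> nat \<Rightarrow> nat" where
  "Bin m y i = (\<Sum>j<m. 2 ^ j * (if (i - 1) * m + (m - j) \<in> y then 1 else 0))"

definition hbit :: "nat \<Rightarrow> nat \<Rightarrow> nat set \<Rightarrow> nat \<Rightarrow> bool" where
  "hbit m t y i = (Bin m y i \<ge> 2 ^ m - t)"

definition Red :: "nat \<Rightarrow> nat \<Rightarrow> nat \<Rightarrow> (nat set \<Rightarrow> real) \<Rightarrow> nat set \<Rightarrow> real" where
  "Red m t n f y = f {i \<in> {1..n}. hbit m t y i}"

definition acoef :: "nat \<Rightarrow> nat \<Rightarrow> nat \<Rightarrow> nat" where
  "acoef m t j = min (t mod 2 ^ (m - j + 1)) (2 ^ (m - j + 1) - t mod 2 ^ (m - j + 1))"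

definition block :: "nat \<Rightarrow> nat set \<Rightarrow> nat \<Rightarrow> nat set" where
  "block m S i = S \<inter> {(i - 1) * m + 1 .. i * m}"

definition blocksupp :: "nat \<Rightarrow> nat \<Rightarrow> nat set \<Rightarrow> nat set" where
  "blocksupp m n S = {i \<in> {1..n}. card (block m S i) > 0}"

definition topidx :: "nat \<Rightarrow> nat set \<Rightarrow> nat \<Rightarrow> nat" where
  "topidx m S i = Max (block m S i) - (i - 1) * m"

end

theory Submission
  imports Defs
begin


definition chi :: "nat set \<Rightarrow> nat \<Rightarrow> real" where
  "chi J N = (-1) ^ card {j\<in>J. bit N j}"

definition chih :: "nat set \<Rightarrow> nat \<Rightarrow> nat \<Rightarrow> real" where
  "chih J j0 k = (-1) ^ card {j\<in>J. j0 < j \<and> bit k (j - Suc j0)}"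

definition tri :: "nat \<Rightarrow> nat \<Rightarrow> nat" where
  "tri L u = min u (L - u)"

lemma bit_div_shift: "j0 < j \<Longrightarrow> bit ((N::nat) div 2 ^ Suc j0) (j - Suc j0) = bit N j"
proof -
  assume "j0 < j"
  have "bit (drop_bit (Suc j0) N) (j - Suc j0) = bit N (Suc j0 + (j - Suc j0))"
    by (simp add: bit_drop_bit_eq)
  then show ?thesis using \<open>j0 < j\<close> by (simp add: drop_bit_eq_div)
qed

lemma bit_j0: "bit (N::nat) j0 \<longleftrightarrow> 2 ^ j0 \<le> N mod 2 ^ Suc j0"
proof -
  have "bit N j0 = bit (take_bit (Suc j0) N) j0" by (simp add: bit_take_bit_iff)
  also have "\<dots> = bit (N mod 2 ^ Suc j0) j0" by (simp add: take_bit_eq_mod)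
  also have "\<dots> = odd (N mod 2 ^ Suc j0 div 2 ^ j0)" by (simp add: bit_iff_odd)
  also have "\<dots> = (2 ^ j0 \<le> N mod 2 ^ Suc j0)"
  proof -
    have lt: "N mod 2 ^ Suc j0 div 2 ^ j0 < 2"
      by (simp add: less_mult_imp_div_less mult.commute)
    show ?thesis
    proof
      assume "odd (N mod 2 ^ Suc j0 div 2 ^ j0)"
      then have "N mod 2 ^ Suc j0 div 2 ^ j0 \<noteq> 0" by (metis even_zero)
      then show "2 ^ j0 \<le> N mod 2 ^ Suc j0" by (metis div_less not_le)
    next
      assume "2 ^ j0 \<le> N mod 2 ^ Suc j0"
      then have "N mod 2 ^ Suc j0 div 2 ^ j0 \<noteq> 0" by (simp add: div_eq_0_iff)
      with lt have "N mod 2 ^ Suc j0 div 2 ^ j0 = 1" by linarith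
      then show "odd (N mod 2 ^ Suc j0 div 2 ^ j0)" by simp
    qed
  qed
  finally show ?thesis .
qed

lemma chi_split:
  assumes "finite J" "j0 \<in> J" "\<forall>j\<in>J. j0 \<le> j"
  shows "chi J N = (if bit N j0 then -1 else 1) * chih J j0 (N div 2 ^ Suc j0)"
proof -
  have eq: "{j\<in>J. bit N j} = (if bit N j0 then {j0} else {}) \<union> {j\<in>J. j0 < j \<and> bit (N div 2 ^ Suc j0) (j - Suc j0)}"
    using assms(2,3) bit_div_shift[of j0 _ N] by (auto simp: order_le_less)
  have fin: "finite {j\<in>J. j0 < j \<and> bit (N div 2 ^ Suc j0) (j - Suc j0)}" using assms(1) by simp
  show ?thesis
    unfolding chi_def chih_def eq using fin
    by (auto simp: card_insert_if)
qed

lemma prefix: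
  assumes "finite J" "j0 \<in> J" "\<forall>j\<in>J. j0 \<le> j"
  shows "(\<Sum>N<x. chi J N) = chih J j0 (x div 2 ^ Suc j0) * real (tri (2 ^ Suc j0) (x mod 2 ^ Suc j0))"
proof (induction x)
  case 0
  then show ?case by (simp add: tri_def)
next
  case (Suc x)
  define L :: nat where "L = 2 ^ Suc j0"
  define u where "u = x mod L"
  define k where "k = x div L"
  have L2: "L = 2 * 2 ^ j0" by (simp add: L_def)
  have x: "x = k * L + u" by (simp add: u_def k_def)
  have uL: "u < L" using L2 by (simp add: u_def)
  have cx: "chi J x = (if 2 ^ j0 \<le> u then -1 else 1) * chih J j0 k"
    using chi_split[OF assms, of x] bit_j0[of x j0] by (simp add: u_def k_def L_def)
  have IH: "(\<Sum>N<x. chi J N) = chih J j0 k * real (tri L u)"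
    using Suc.IH by (simp add: u_def k_def L_def)
  show ?case
  proof (cases "Suc u = L")
    case True
    have sx: "Suc x = Suc k * L" using x True by simp
    have d: "Suc x div L = Suc k" and mo: "Suc x mod L = 0"
      using sx L2 by simp_all
    have "2 \<le> L" using L2 by simp
    then have t1: "tri L u = 1" using True unfolding tri_def by linarith
    have "2 ^ j0 \<le> u" using True L2 by simp
    then show ?thesis using IH cx d mo t1 unfolding L_def[symmetric]
      by (simp add: tri_def)
  next
    case False
    then have su: "Suc u < L" using uL by simp
    have sx: "Suc x = Suc u + k * L" using x by simp
    have Lp: "L \<noteq> 0" using su by simp
    have "Suc x div L = k + Suc u div L" unfolding sx by (simp only: div_mult_self1[OF Lp])
    then have d: "Suc x div L = k" using su by simp
    have "Suc x mod L = Suc u mod L" unfolding sx by (simp only: mod_mult_self1)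
    then have mo: "Suc x mod L = Suc u" using su by simp
    have tr: "real (tri L (Suc u)) = real (tri L u) + (if 2 ^ j0 \<le> u then -1 else 1)"
      using su L2 by (auto simp: tri_def)
    show ?thesis using IH cx d mo tr unfolding L_def[symmetric]
      by (simp add: algebra_simps)
  qed
qed

lemma sigma_props:
  assumes fin: "finite J" and j0J: "j0 \<in> J" and minJ: "\<forall>j\<in>J. j0 \<le> j" and ltm: "\<forall>j\<in>J. j < m"
    and tle: "t \<le> 2 ^ m" and t1: "1 \<le> t"
  shows "(\<Sum>N<2^m. chi J N) = 0"
    and "(\<Sum>N<2^m - t. chi J N) = - (\<Sum>N\<in>{2^m-t..<2^m}. chi J N)"
    and "\<bar>\<Sum>N\<in>{2^m-t..<2^m}. chi J N\<bar> = real (min (t mod 2 ^ Suc j0) (2 ^ Suc j0 - t mod 2 ^ Suc j0))"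
    and "t \<le> 2 ^ j0 \<Longrightarrow> (\<Sum>N\<in>{2^m-t..<2^m}. chi J N) = (-1) ^ card J * real t"
proof -
  define L :: nat where "L = 2 ^ Suc j0"
  have jm: "Suc j0 \<le> m" using ltm j0J by auto
  define c :: nat where "c = 2 ^ (m - Suc j0)"
  have mc: "(2::nat) ^ m = c * L" unfolding c_def L_def using jm
    by (metis le_add_diff_inverse2 power_add)
  have Lpos: "0 < L" by (simp add: L_def)
  note P = prefix[OF fin j0J minJ, folded L_def]
  have P0: "(\<Sum>N<2^m. chi J N) = 0" using P[of "2^m"] by (simp add: mc tri_def)
  then show "(\<Sum>N<2^m. chi J N) = 0" .
  have split: "(\<Sum>N<2^m - t. chi J N) + (\<Sum>N\<in>{2^m-t..<2^m}. chi J N) = (\<Sum>N<2^m. chi J N)"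
    using sum.atLeastLessThan_concat[of 0 "2^m - t" "2^m" "chi J"] by (simp add: lessThan_atLeast0)
  then show s2: "(\<Sum>N<2^m - t. chi J N) = - (\<Sum>N\<in>{2^m-t..<2^m}. chi J N)" using P0 by simp
  define r where "r = t mod L"
  obtain q where tq: "t = q * L + r" unfolding r_def by (metis div_mult_mod_eq)
  have rL: "r < L" unfolding r_def using Lpos by simp
  have trimod: "tri L ((2^m - t) mod L) = min r (L - r)"
  proof (cases "r = 0")
    case True
    have "(2^m - t) = (c - q) * L" using tq True mc by (simp add: diff_mult_distrib)
    then show ?thesis using True by (simp add: tri_def)
  next
    case False
    have "q * L < c * L" using tq tle mc False by linarith
    then have qc: "q < c" by simp
    have "(2::nat)^m - t = (c - q - 1) * L + (L - r)"
    proof -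
      have cq: "c = (c - q - 1) + 1 + q" using qc by simp
      have "c * L = ((c - q - 1) + 1 + q) * L" using cq by (rule arg_cong)
      also have "\<dots> = (c - q - 1) * L + L + q * L" by (simp only: distrib_right mult_1_left)
      finally have "c * L = (c - q - 1) * L + L + q * L" .
      then show ?thesis using mc tq rL by linarith
    qed
    then have e2: "(2::nat)^m - t = (L - r) + (c - q - 1) * L" by linarith
    have "(2^m - t) mod L = (L - r) mod L" unfolding e2 by (simp only: mod_mult_self1)
    then have "(2^m - t) mod L = L - r" using rL False by simp
    then show ?thesis by (simp add: tri_def min.commute)
  qed
  have chabs: "\<bar>chih J j0 k\<bar> = 1" for k by (simp add: chih_def)
  show "\<bar>\<Sum>N\<in>{2^m-t..<2^m}. chi J N\<bar> = real (min (t mod 2 ^ Suc j0) (2 ^ Suc j0 - t mod 2 ^ Suc j0))"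
  proof -
    have "\<bar>\<Sum>N\<in>{2^m-t..<2^m}. chi J N\<bar> = \<bar>\<Sum>N<2^m - t. chi J N\<bar>" using s2 by simp
    also have "\<dots> = real (tri L ((2^m - t) mod L))" using P[of "2^m - t"] by (simp add: abs_mult chabs)
    finally show ?thesis using trimod by (simp add: r_def L_def)
  qed
  assume tj: "t \<le> 2 ^ j0"
  have "(0::nat) < 2 ^ j0" by simp
  then have tL: "t < L" using tj unfolding L_def power_Suc by linarith
  have c1: "1 \<le> c" by (simp add: c_def)
  have cq: "c = (c - 1) + 1" using c1 by simp
  have "c * L = ((c - 1) + 1) * L" using cq by (rule arg_cong)
  also have "\<dots> = (c - 1) * L + L" by (simp only: distrib_right mult_1_left)
  finally have "c * L = (c - 1) * L + L" .
  then have e: "(2::nat)^m - t = (c - 1) * L + (L - t)" using mc tL by linarith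
  have e2: "(2::nat)^m - t = (L - t) + (c - 1) * L" using e by linarith
  have "(2^m - t) div L = (c - 1) + (L - t) div L" unfolding e2 using Lpos by (simp only: div_mult_self1 neq0_conv)
  then have dv: "(2^m - t) div L = c - 1" using tL t1 by simp
  have "(2^m - t) mod L = (L - t) mod L" unfolding e2 by (simp only: mod_mult_self1)
  then have md: "(2^m - t) mod L = L - t" using tL t1 by simp
  have tri_t: "tri L (L - t) = t" using tj by (simp add: tri_def L_def)
  have cm: "c - 1 = mask (m - Suc j0)" by (simp add: c_def mask_eq_exp_minus_1)
  have setJ: "{j\<in>J. j0 < j \<and> bit (c - 1) (j - Suc j0)} = J - {j0}"
  proof -
    have "x - Suc j0 < m - Suc j0" if "x \<in> J" "x \<noteq> j0" for x
      using minJ ltm that by (metis diff_less_mono le_neq_implies_less Suc_leI)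
    then show ?thesis using minJ unfolding cm by (auto simp: bit_mask_iff order_le_less)
  qed
  have cardJ: "card (J - {j0}) = card J - 1" using fin j0J by simp
  have "card J \<noteq> 0" using fin j0J by auto
  then have cJ: "card J \<ge> 1" by simp
  have "(\<Sum>N<2^m - t. chi J N) = (-1) ^ (card J - 1) * real t"
    using P[of "2^m - t"] unfolding dv md tri_t chih_def setJ cardJ by simp
  moreover have "(-1::real) ^ card J = - ((-1) ^ (card J - 1))"
  proof -
    have "card J = Suc (card J - 1)" using cJ by simp
    then have "(-1::real) ^ card J = (-1) ^ Suc (card J - 1)" by (rule arg_cong)
    then show ?thesis by simp
  qed
  ultimately show "(\<Sum>N\<in>{2^m-t..<2^m}. chi J N) = (-1) ^ card J * real t" using s2 by simp
qed



definition blk :: "nat \<Rightarrow> nat \<Rightarrow> nat set" where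
  "blk m i = {(i - 1) * m + 1 .. i * m}"

definition pos :: "nat \<Rightarrow> nat \<Rightarrow> nat \<Rightarrow> nat" where
  "pos m i j = (i - 1) * m + (m - j)"

definition enc :: "nat \<Rightarrow> nat \<Rightarrow> nat \<Rightarrow> nat set" where
  "enc m i N = pos m i ` {j. j < m \<and> bit N j}"

definition Jset :: "nat \<Rightarrow> nat set \<Rightarrow> nat \<Rightarrow> nat set" where
  "Jset m S i = {j. j < m \<and> pos m i j \<in> S}"

lemma pos_inj: "inj_on (pos m i) {..<m}"
  by (auto simp: inj_on_def pos_def)

lemma pos_inj': "A \<subseteq> {..<m} \<Longrightarrow> inj_on (pos m i) A"
  using pos_inj inj_on_subset by blast

lemma im_eq: "i * m = (i - 1) * m + m" if "1 \<le> i" for i m :: nat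
proof -
  have "i = (i - 1) + 1" using that by simp
  then have "i * m = ((i - 1) + 1) * m" by (rule arg_cong)
  then show ?thesis by (simp only: distrib_right mult_1_left)
qed

lemma pos_blk: "1 \<le> i \<Longrightarrow> j < m \<Longrightarrow> pos m i j \<in> blk m i"
  using im_eq[of i m] by (auto simp: pos_def blk_def)

lemma mem_enc: "j < m \<Longrightarrow> pos m i j \<in> enc m i N \<longleftrightarrow> bit N j"
  using pos_inj[of m i] unfolding enc_def inj_on_def by auto

lemma Bin_enc: assumes "N < 2 ^ m" shows "Bin m (enc m i N) i = N"
proof -
  have "Bin m (enc m i N) i = (\<Sum>j<m. 2 ^ j * (if bit N j then 1 else 0))"
    unfolding Bin_def using mem_enc[of _ m i N] by (intro sum.cong) (auto simp: pos_def)
  also have "\<dots> = (\<Sum>k = 0..<m. push_bit k (of_bool (bit N k)))"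
    unfolding lessThan_atLeast0 by (intro sum.cong) (auto simp: push_bit_eq_mult)
  also have "\<dots> = take_bit m N" by (simp add: take_bit_sum)
  also have "\<dots> = N" using assms by (simp add: take_bit_eq_mod)
  finally show ?thesis .
qed

lemma card_blk: "1 \<le> i \<Longrightarrow> card (blk m i) = m"
  using im_eq[of i m] by (simp add: blk_def)

lemma enc_sub: "1 \<le> i \<Longrightarrow> enc m i N \<subseteq> blk m i"
  unfolding enc_def using pos_blk by auto

lemma enc_bij: assumes "1 \<le> i" shows "bij_betw (enc m i) {..<2^m} (Pow (blk m i))"
proof -
  have inj: "inj_on (enc m i) {..<2^m}"
    by (metis Bin_enc inj_onI lessThan_iff)
  have sub: "enc m i ` {..<2^m} \<subseteq> Pow (blk m i)" using enc_sub[OF assms] by auto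
  have "card (enc m i ` {..<2^m}) = 2 ^ m" using card_image[OF inj] by simp
  also have "\<dots> = card (Pow (blk m i))" using card_blk[OF assms] by (simp add: card_Pow blk_def)
  finally have "enc m i ` {..<2^m} = Pow (blk m i)"
    using sub by (intro card_subset_eq) (auto simp: blk_def)
  then show ?thesis using inj by (simp add: bij_betw_def)
qed

lemma hbit_enc: "N < 2 ^ m \<Longrightarrow> hbit m t (enc m i N) i \<longleftrightarrow> 2 ^ m - t \<le> N"
  by (simp add: hbit_def Bin_enc)

lemma card_S_enc: "card (S \<inter> enc m i N) = card {j\<in>Jset m S i. bit N j}"
proof -
  have "S \<inter> enc m i N = pos m i ` {j\<in>Jset m S i. bit N j}"
    unfolding enc_def Jset_def by auto
  moreover have "inj_on (pos m i) {j\<in>Jset m S i. bit N j}"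
    by (rule pos_inj') (auto simp: Jset_def)
  ultimately show ?thesis by (simp add: card_image)
qed

lemma block_Jset: assumes "1 \<le> i" shows "block m S i = pos m i ` Jset m S i"
proof
  show "pos m i ` Jset m S i \<subseteq> block m S i"
    using pos_blk[OF assms] by (auto simp: Jset_def block_def blk_def)
  show "block m S i \<subseteq> pos m i ` Jset m S i"
  proof
    fix x assume x: "x \<in> block m S i"
    then have xs: "x \<in> S" and lo: "(i - 1) * m + 1 \<le> x" and hi: "x \<le> (i - 1) * m + m"
      using im_eq[OF assms, of m] by (auto simp: block_def)
    define j where "j = (i - 1) * m + m - x"
    have "j < m" using lo hi by (simp add: j_def)
    moreover have "pos m i j = x" using lo hi by (simp add: j_def pos_def)
    ultimately show "x \<in> pos m i ` Jset m S i" using xs by (force simp: Jset_def)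
  qed
qed



definition cf :: "nat \<Rightarrow> nat \<Rightarrow> (nat \<Rightarrow> nat set \<Rightarrow> real) \<Rightarrow> nat \<Rightarrow> bool \<Rightarrow> real" where
  "cf m t v i b = (\<Sum>B\<in>Pow (blk m i). if hbit m t B i = b then v i B else 0)"

lemma Bin_local: "1 \<le> i \<Longrightarrow> Bin m Y i = Bin m (Y \<inter> blk m i) i"
  unfolding Bin_def
proof (intro sum.cong refl)
  fix j assume i1: "1 \<le> i" and j: "j \<in> {..<m}"
  have "(i - 1) * m + (m - j) \<in> blk m i" using pos_blk[OF i1, of j m] j by (simp add: pos_def)
  then show "2 ^ j * (if (i - 1) * m + (m - j) \<in> Y then 1 else 0)
      = 2 ^ j * (if (i - 1) * m + (m - j) \<in> Y \<inter> blk m i then 1 else 0)" by simp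
qed

lemma hbit_local: assumes i1: "1 \<le> i" shows "hbit m t Y i = hbit m t (Y \<inter> blk m i) i"
  unfolding hbit_def by (simp only: Bin_local[OF i1, of m Y])

lemma sum_Pow_Un:
  assumes "finite A" "finite B" "A \<inter> B = {}"
  shows "(\<Sum>Z\<in>Pow (A \<union> B). G Z) = (\<Sum>Y\<in>Pow A. \<Sum>W\<in>Pow B. G (Y \<union> W))"
proof -
  have im: "Pow (A \<union> B) = (\<lambda>(Y,W). Y \<union> W) ` (Pow A \<times> Pow B)"
  proof
    show "Pow (A \<union> B) \<subseteq> (\<lambda>(Y,W). Y \<union> W) ` (Pow A \<times> Pow B)"
    proof
      fix Z assume "Z \<in> Pow (A \<union> B)"
      then have "Z = (\<lambda>(Y,W). Y \<union> W) (Z \<inter> A, Z \<inter> B)" by auto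
      then show "Z \<in> (\<lambda>(Y,W). Y \<union> W) ` (Pow A \<times> Pow B)" by blast
    qed
  qed auto
  have inj: "inj_on (\<lambda>(Y,W). Y \<union> W) (Pow A \<times> Pow B)"
  proof (rule inj_onI, clarsimp)
    fix Y W Y' W' assume h: "Y \<subseteq> A" "W \<subseteq> B" "Y' \<subseteq> A" "W' \<subseteq> B" "Y \<union> W = Y' \<union> W'"
    have "Y = (Y \<union> W) \<inter> A" "Y' = (Y' \<union> W') \<inter> A" "W = (Y \<union> W) \<inter> B" "W' = (Y' \<union> W') \<inter> B"
      using h assms(3) by auto
    then show "Y = Y' \<and> W = W'" using h(5) by metis
  qed
  have "(\<Sum>Z\<in>Pow (A \<union> B). G Z) = (\<Sum>p\<in>Pow A \<times> Pow B. G ((\<lambda>(Y,W). Y \<union> W) p))"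
    unfolding im by (rule sum.reindex[OF inj, unfolded comp_def])
  also have "\<dots> = (\<Sum>Y\<in>Pow A. \<Sum>W\<in>Pow B. G (Y \<union> W))"
    by (simp add: sum.cartesian_product split_def)
  finally show ?thesis .
qed

lemma core:
  assumes m1: "1 \<le> m"
  shows "(\<Sum>Y\<in>Pow {1..m*n}. F {i\<in>{1..n}. hbit m t Y i} * (\<Prod>i\<in>{1..n}. v i (Y \<inter> blk m i)))
       = (\<Sum>X\<in>Pow {1..n}. F X * (\<Prod>i\<in>{1..n}. cf m t v i (i\<in>X)))"
proof (induction n arbitrary: F)
  case 0
  then show ?case by simp
next
  case (Suc n)
  define A where "A = {1..m*n}"
  define Bk where "Bk = blk m (Suc n)"
  define P where "P Y = (\<Prod>i\<in>{1..n}. v i (Y \<inter> blk m i))" for Y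
  define pat where "pat Y = {i\<in>{1..n}. hbit m t Y i}" for Y
  define C where "C X = (\<Prod>i\<in>{1..n}. cf m t v i (i\<in>X))" for X
  define e where "e W = (if hbit m t W (Suc n) then {Suc n} else {})" for W
  have Bk_eq: "Bk = {m*n+1..m*n+m}" by (simp add: Bk_def blk_def mult.commute)
  have AB: "{1..m * Suc n} = A \<union> Bk" using m1 by (auto simp: A_def Bk_eq)
  have ABd: "A \<inter> Bk = {}" by (auto simp: A_def Bk_eq)
  have blk_sub: "blk m i \<subseteq> A" if "i \<in> {1..n}" for i
  proof -
    have "i * m \<le> n * m" using that by simp
    then show ?thesis by (auto simp: blk_def A_def mult.commute)
  qed
  have key: "F {i\<in>{1..Suc n}. hbit m t (Y \<union> W) i} * (\<Prod>i\<in>{1..Suc n}. v i ((Y \<union> W) \<inter> blk m i))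
      = v (Suc n) W * (F (pat Y \<union> e W) * P Y)" if Y: "Y \<subseteq> A" and W: "W \<subseteq> Bk" for Y W
  proof -
    have a: "(Y \<union> W) \<inter> blk m i = Y \<inter> blk m i" if "i \<in> {1..n}" for i
      using blk_sub[OF that] W ABd by blast
    have b: "(Y \<union> W) \<inter> Bk = W" using Y W ABd by blast
    have c: "hbit m t (Y \<union> W) i = hbit m t Y i" if "i \<in> {1..n}" for i
    proof -
      have i1: "1 \<le> i" using that by simp
      have "hbit m t (Y \<union> W) i = hbit m t ((Y \<union> W) \<inter> blk m i) i" by (rule hbit_local[OF i1])
      also have "\<dots> = hbit m t (Y \<inter> blk m i) i" by (simp only: a[OF that])
      also have "\<dots> = hbit m t Y i" by (rule hbit_local[OF i1, symmetric])
      finally show ?thesis .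
    qed
    have d: "hbit m t (Y \<union> W) (Suc n) = hbit m t W (Suc n)"
    proof -
      have i1: "1 \<le> Suc n" by simp
      have "hbit m t (Y \<union> W) (Suc n) = hbit m t ((Y \<union> W) \<inter> blk m (Suc n)) (Suc n)" by (rule hbit_local[OF i1])
      also have "\<dots> = hbit m t W (Suc n)" using b unfolding Bk_def by (simp only:)
      finally show ?thesis .
    qed
    have pat_eq: "{i\<in>{1..Suc n}. hbit m t (Y \<union> W) i} = pat Y \<union> e W"
    proof (rule set_eqI)
      fix x
      show "x \<in> {i\<in>{1..Suc n}. hbit m t (Y \<union> W) i} \<longleftrightarrow> x \<in> pat Y \<union> e W"
      proof (cases "x = Suc n")
        case True then show ?thesis using d by (auto simp: pat_def e_def)
      next
        case False
        show ?thesis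
        proof (cases "x \<in> {1..n}")
          case True then show ?thesis using c[OF True] by (auto simp: pat_def e_def)
        next
          case False2: False
          then show ?thesis using False by (auto simp: pat_def e_def)
        qed
      qed
    qed
    have prod_eq: "(\<Prod>i\<in>{1..Suc n}. v i ((Y \<union> W) \<inter> blk m i)) = P Y * v (Suc n) W"
    proof -
      have "{1..Suc n} = insert (Suc n) {1..n}" by auto
      then have "(\<Prod>i\<in>{1..Suc n}. v i ((Y \<union> W) \<inter> blk m i))
          = v (Suc n) ((Y \<union> W) \<inter> blk m (Suc n)) * (\<Prod>i\<in>{1..n}. v i ((Y \<union> W) \<inter> blk m i))"
        by simp
      also have "\<dots> = v (Suc n) W * P Y" using a b by (simp add: P_def Bk_def)
      finally show ?thesis by simp
    qed
    show ?thesis unfolding pat_eq prod_eq by simp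
  qed
  have "(\<Sum>Y\<in>Pow {1..m*Suc n}. F {i\<in>{1..Suc n}. hbit m t Y i} * (\<Prod>i\<in>{1..Suc n}. v i (Y \<inter> blk m i)))
      = (\<Sum>Y\<in>Pow A. \<Sum>W\<in>Pow Bk. v (Suc n) W * (F (pat Y \<union> e W) * P Y))"
  proof -
    have "(\<Sum>Y\<in>Pow {1..m*Suc n}. F {i\<in>{1..Suc n}. hbit m t Y i} * (\<Prod>i\<in>{1..Suc n}. v i (Y \<inter> blk m i)))
      = (\<Sum>Y\<in>Pow A. \<Sum>W\<in>Pow Bk. F {i\<in>{1..Suc n}. hbit m t (Y \<union> W) i} * (\<Prod>i\<in>{1..Suc n}. v i ((Y \<union> W) \<inter> blk m i)))"
      unfolding AB by (rule sum_Pow_Un) (auto simp: A_def Bk_eq ABd)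
    also have "\<dots> = (\<Sum>Y\<in>Pow A. \<Sum>W\<in>Pow Bk. v (Suc n) W * (F (pat Y \<union> e W) * P Y))"
    proof (intro sum.cong refl)
      fix Y W assume "Y \<in> Pow A" "W \<in> Pow Bk"
      then show "F {i\<in>{1..Suc n}. hbit m t (Y \<union> W) i} * (\<Prod>i\<in>{1..Suc n}. v i ((Y \<union> W) \<inter> blk m i))
          = v (Suc n) W * (F (pat Y \<union> e W) * P Y)" using key by blast
    qed
    finally show ?thesis .
  qed
  also have "\<dots> = (\<Sum>W\<in>Pow Bk. v (Suc n) W * (\<Sum>Y\<in>Pow A. F (pat Y \<union> e W) * P Y))"
    by (subst sum.swap) (simp add: sum_distrib_left)
  also have "\<dots> = (\<Sum>W\<in>Pow Bk. v (Suc n) W * (\<Sum>X\<in>Pow {1..n}. F (X \<union> e W) * C X))"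
    using Suc.IH[of "\<lambda>X. F (X \<union> e W)" for W] by (simp add: A_def pat_def P_def C_def)
  also have "\<dots> = (\<Sum>W\<in>Pow Bk. \<Sum>X\<in>Pow {1..n}. C X * (v (Suc n) W * F (X \<union> e W)))"
    by (simp add: sum_distrib_left mult_ac)
  also have "\<dots> = (\<Sum>X\<in>Pow {1..n}. \<Sum>W\<in>Pow Bk. C X * (v (Suc n) W * F (X \<union> e W)))"
    by (rule sum.swap)
  also have "\<dots> = (\<Sum>X\<in>Pow {1..n}. C X * (\<Sum>W\<in>Pow Bk. v (Suc n) W * F (X \<union> e W)))"
    by (simp add: sum_distrib_left)
  also have "\<dots> = (\<Sum>X\<in>Pow {1..n}. C X * (cf m t v (Suc n) True * F (insert (Suc n) X) + cf m t v (Suc n) False * F X))"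
  proof (intro sum.cong refl arg_cong[where f = "\<lambda>z. C _ * z"])
    fix X
    have "(\<Sum>W\<in>Pow Bk. v (Suc n) W * F (X \<union> e W))
       = (\<Sum>W\<in>Pow Bk. (if hbit m t W (Suc n) = True then v (Suc n) W else 0) * F (insert (Suc n) X)
                     + (if hbit m t W (Suc n) = False then v (Suc n) W else 0) * F X)"
      by (intro sum.cong refl) (auto simp: e_def)
    also have "\<dots> = cf m t v (Suc n) True * F (insert (Suc n) X) + cf m t v (Suc n) False * F X"
      by (simp add: sum.distrib sum_distrib_right cf_def Bk_def del: eq_True eq_False)
    finally show "(\<Sum>W\<in>Pow Bk. v (Suc n) W * F (X \<union> e W)) = cf m t v (Suc n) True * F (insert (Suc n) X) + cf m t v (Suc n) False * F X" .
  qed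
  also have "\<dots> = (\<Sum>X\<in>Pow {1..Suc n}. F X * (\<Prod>i\<in>{1..Suc n}. cf m t v i (i\<in>X)))"
  proof -
    have "{1..Suc n} = {1..n} \<union> {Suc n}" by auto
    then have "(\<Sum>X\<in>Pow {1..Suc n}. F X * (\<Prod>i\<in>{1..Suc n}. cf m t v i (i\<in>X)))
        = (\<Sum>X\<in>Pow {1..n}. \<Sum>W\<in>Pow {Suc n}. F (X \<union> W) * (\<Prod>i\<in>{1..Suc n}. cf m t v i (i\<in>X \<union> W)))"
      by (simp only:) (rule sum_Pow_Un, auto)
    also have "\<dots> = (\<Sum>X\<in>Pow {1..n}. C X * (cf m t v (Suc n) True * F (insert (Suc n) X) + cf m t v (Suc n) False * F X))"
    proof (intro sum.cong refl)
      fix X assume X: "X \<in> Pow {1..n}"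
      have ins: "{1..Suc n} = insert (Suc n) {1..n}" by auto
      have p1: "(\<Prod>i\<in>{1..Suc n}. cf m t v i (i\<in>X)) = cf m t v (Suc n) False * C X"
      proof -
        have "(\<Prod>i\<in>{1..Suc n}. cf m t v i (i\<in>X)) = cf m t v (Suc n) (Suc n \<in> X) * C X"
          unfolding ins C_def by simp
        moreover have "Suc n \<notin> X" using X by auto
        ultimately show ?thesis by simp
      qed
      have p2: "(\<Prod>i\<in>{1..Suc n}. cf m t v i (i\<in>insert (Suc n) X)) = cf m t v (Suc n) True * C X"
      proof -
        have "(\<Prod>i\<in>{1..Suc n}. cf m t v i (i\<in>insert (Suc n) X)) = cf m t v (Suc n) True * (\<Prod>i\<in>{1..n}. cf m t v i (i\<in>insert (Suc n) X))"
          unfolding ins by simp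
        also have "(\<Prod>i\<in>{1..n}. cf m t v i (i\<in>insert (Suc n) X)) = C X"
          unfolding C_def by (intro prod.cong) auto
        finally show ?thesis .
      qed
      have pw: "Pow {Suc n} = {{}, {Suc n}}" by auto
      show "(\<Sum>W\<in>Pow {Suc n}. F (X \<union> W) * (\<Prod>i\<in>{1..Suc n}. cf m t v i (i\<in>X \<union> W)))
          = C X * (cf m t v (Suc n) True * F (insert (Suc n) X) + cf m t v (Suc n) False * F X)"
        unfolding pw using p1 p2 by (simp add: algebra_simps)
    qed
    finally show ?thesis by simp
  qed
  finally show ?case .
qed



lemma blk_iff: assumes "1 \<le> m" "1 \<le> i"
  shows "x \<in> blk m i \<longleftrightarrow> 1 \<le> x \<and> (x - 1) div m = i - 1"
proof
  assume x: "x \<in> blk m i"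
  then have lo: "(i - 1) * m \<le> x - 1" and hi: "x - 1 < (i - 1) * m + m"
    using im_eq[OF assms(2), of m] by (auto simp: blk_def)
  have "(x - 1) div m = i - 1"
    using lo hi by (metis add.commute div_nat_eqI mult.commute mult_Suc_right)
  then show "1 \<le> x \<and> (x - 1) div m = i - 1" using x by (auto simp: blk_def)
next
  assume h: "1 \<le> x \<and> (x - 1) div m = i - 1"
  have "(i - 1) * m \<le> x - 1" using h by (metis div_times_less_eq_dividend)
  moreover have "x - 1 < (i - 1) * m + m" using h assms(1)
    by (metis add.commute dividend_less_div_times less_one not_le zero_less_one less_le_trans)
  ultimately show "x \<in> blk m i" using h im_eq[OF assms(2), of m] by (auto simp: blk_def)
qed

lemma blk_cover: assumes "1 \<le> m" "x \<in> {1..m*n}" shows "\<exists>i\<in>{1..n}. x \<in> blk m i"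
proof -
  define i where "i = (x - 1) div m + 1"
  have "x - 1 < m * n" using assms(2) by auto
  then have "(x - 1) div m < n" using assms(1) by (simp add: div_less_iff_less_mult mult.commute)
  then have "i \<in> {1..n}" by (simp add: i_def)
  moreover have "x \<in> blk m i" using blk_iff[OF assms(1), of i x] assms(2) by (simp add: i_def)
  ultimately show ?thesis by blast
qed

lemma blk_disj: assumes "1 \<le> m" "1 \<le> i" "1 \<le> j" "i \<noteq> j" shows "blk m i \<inter> blk m j = {}"
proof (rule ccontr)
  assume "blk m i \<inter> blk m j \<noteq> {}"
  then obtain x where "x \<in> blk m i" "x \<in> blk m j" by blast
  then have "(x - 1) div m = i - 1" "(x - 1) div m = j - 1"
    using blk_iff[OF assms(1) assms(2)] blk_iff[OF assms(1) assms(3)] by blast+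
  then show False using assms(2-4) by simp
qed

lemma card_decomp: assumes "1 \<le> m" "A \<subseteq> {1..m*n}"
  shows "card A = (\<Sum>i\<in>{1..n}. card (A \<inter> blk m i))"
proof -
  have "A = (\<Union>i\<in>{1..n}. A \<inter> blk m i)" using blk_cover[OF assms(1)] assms(2) by blast
  moreover have "card (\<Union>i\<in>{1..n}. A \<inter> blk m i) = (\<Sum>i\<in>{1..n}. card (A \<inter> blk m i))"
  proof (rule card_UN_disjoint)
    show "finite {1..n}" by simp
    show "\<forall>i\<in>{1..n}. finite (A \<inter> blk m i)" by (simp add: blk_def)
    show "\<forall>i\<in>{1..n}. \<forall>j\<in>{1..n}. i \<noteq> j \<longrightarrow> A \<inter> blk m i \<inter> (A \<inter> blk m j) = {}"
      using blk_disj[OF assms(1)] by fastforce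
  qed
  ultimately show ?thesis by simp
qed

lemma sign_decomp: assumes "1 \<le> m" "S \<subseteq> {1..m*n}"
  shows "(-1::real) ^ card (S \<inter> Y) = (\<Prod>i\<in>{1..n}. (-1) ^ card (S \<inter> (Y \<inter> blk m i)))"
proof -
  have "card (S \<inter> Y) = (\<Sum>i\<in>{1..n}. card (S \<inter> Y \<inter> blk m i))"
    by (rule card_decomp[OF assms(1)]) (use assms(2) in auto)
  then show ?thesis by (simp add: power_sum Int_assoc)
qed

lemma cf_chi: assumes "1 \<le> i"
  shows "cf m t (\<lambda>i B. (-1::real) ^ card (S \<inter> B)) i b
       = (\<Sum>N<2^m. if (2^m - t \<le> N) = b then chi (Jset m S i) N else 0)"
proof -
  have "(\<Sum>N<2^m. if (2^m - t \<le> N) = b then chi (Jset m S i) N else 0)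
      = (\<Sum>N<2^m. (\<lambda>B. if hbit m t B i = b then (-1::real) ^ card (S \<inter> B) else 0) (enc m i N))"
    by (intro sum.cong refl) (simp add: hbit_enc card_S_enc chi_def)
  also have "\<dots> = cf m t (\<lambda>i B. (-1::real) ^ card (S \<inter> B)) i b"
    unfolding cf_def by (rule sum.reindex_bij_betw[OF enc_bij[OF assms]])
  finally show ?thesis by simp
qed

lemma cf_true: assumes "1 \<le> i"
  shows "cf m t (\<lambda>i B. (-1::real) ^ card (S \<inter> B)) i True = (\<Sum>N\<in>{2^m-t..<2^m}. chi (Jset m S i) N)"
proof -
  have e: "{N \<in> {..<2^m}. (2^m - t \<le> N) = True} = {2^m-t..<(2::nat)^m}" by auto
  have "(\<Sum>N<2^m. if (2^m - t \<le> N) = True then chi (Jset m S i) N else 0)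
     = sum (chi (Jset m S i)) {N \<in> {..<2^m}. (2^m - t \<le> N) = True}"
    using sum.inter_filter[of "{..<2^m}" "chi (Jset m S i)" "\<lambda>N. (2^m - t \<le> N) = True"]
    by (metis finite_lessThan)
  then show ?thesis unfolding cf_chi[OF assms] e .
qed

lemma cf_false: assumes "1 \<le> i"
  shows "cf m t (\<lambda>i B. (-1::real) ^ card (S \<inter> B)) i False = (\<Sum>N<2^m-t. chi (Jset m S i) N)"
proof -
  have e: "{N \<in> {..<2^m}. (2^m - t \<le> N) = False} = {..<(2::nat)^m - t}" by auto
  have "(\<Sum>N<2^m. if (2^m - t \<le> N) = False then chi (Jset m S i) N else 0)
     = sum (chi (Jset m S i)) {N \<in> {..<2^m}. (2^m - t \<le> N) = False}"
    using sum.inter_filter[of "{..<2^m}" "chi (Jset m S i)" "\<lambda>N. (2^m - t \<le> N) = False"]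
    by (metis finite_lessThan)
  then show ?thesis unfolding cf_chi[OF assms] e .
qed


lemma block_info:
  assumes "1 \<le> i"
  shows "finite (Jset m S i)" "Jset m S i \<subseteq> {..<m}" "card (block m S i) = card (Jset m S i)"
proof -
  show sub: "Jset m S i \<subseteq> {..<m}" by (auto simp: Jset_def)
  then show fin: "finite (Jset m S i)" using finite_subset by blast
  show "card (block m S i) = card (Jset m S i)"
    unfolding block_Jset[OF assms] by (rule card_image[OF pos_inj'[OF sub]])
qed

lemma topidx_eq: assumes i1: "1 \<le> i" and ne: "Jset m S i \<noteq> {}"
  shows "topidx m S i = m - Min (Jset m S i)"
proof -
  define J where "J = Jset m S i"
  have fin: "finite J" and sub: "J \<subseteq> {..<m}" using block_info[OF i1] by (auto simp: J_def)
  define j0 where "j0 = Min J"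
  have j0J: "j0 \<in> J" using fin ne by (simp add: j0_def J_def)
  have j0m: "j0 < m" using j0J sub by auto
  have mx: "Max (pos m i ` J) = pos m i j0"
  proof (rule Max_eqI)
    show "finite (pos m i ` J)" using fin by simp
    show "pos m i j0 \<in> pos m i ` J" using j0J by simp
    fix y assume "y \<in> pos m i ` J"
    then obtain j where "j \<in> J" "y = pos m i j" by auto
    moreover have "j0 \<le> j" using \<open>j \<in> J\<close> fin by (simp add: j0_def)
    ultimately show "y \<le> pos m i j0" by (simp add: pos_def)
  qed
  show ?thesis unfolding topidx_def block_Jset[OF i1] J_def[symmetric] mx j0_def[symmetric]
    by (simp add: pos_def)
qed

lemma acoef_eq: "j0 < m \<Longrightarrow> acoef m t (m - j0) = min (t mod 2 ^ Suc j0) (2 ^ Suc j0 - t mod 2 ^ Suc j0)"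
  by (simp add: acoef_def Suc_diff_le)

lemma prod_if_card: "finite A \<Longrightarrow> (\<Prod>i\<in>A. if i \<in> X then a else b) = a ^ card (A \<inter> X) * b ^ card (A - X)"
  by (simp add: prod.If_cases Diff_eq)

theorem proposition2p2:
  fixes m t n :: nat and p :: real and f :: "nat set \<Rightarrow> real" and S :: "nat set"
  assumes "m \<ge> 1" and "1 \<le> t" and "t \<le> 2 ^ (m - 1)"
    and "p = real t / 2 ^ m"
    and "S \<subseteq> {1..m * n}"
  shows "\<bar>fourier (1/2) (m * n) (Red m t n f) S\<bar> =
           (\<Prod>i\<in>blocksupp m n S. real (acoef m t (topidx m S i)) / real t)
           * (sqrt (p / (1 - p))) ^ card (blocksupp m n S)
           * \<bar>fourier p n f (blocksupp m n S)\<bar>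
         \<and> ((\<forall>i\<in>blocksupp m n S. int (topidx m S i) \<le> \<lfloor>log 2 (1 / p)\<rfloor>) \<longrightarrow>
           fourier (1/2) (m * n) (Red m t n f) S =
           (- sqrt (p / (1 - p))) ^ card (blocksupp m n S) * (-1) ^ card S
           * fourier p n f (blocksupp m n S))"
proof -
  note m1 = assms(1) and t1 = assms(2) and tm = assms(3) and pdef = assms(4) and Ssub = assms(5)
  define S' where "S' = blocksupp m n S"
  define v where "v = (\<lambda>(i::nat) B. (-1::real) ^ card (S \<inter> B))"
  define q where "q = sqrt (p * (1 - p))"
  define sp where "sp = sqrt (p / (1 - p))"
  define \<sigma> where "\<sigma> i = (\<Sum>N\<in>{2^m-t..<2^m}. chi (Jset m S i) N)" for i
  define r where "r i = - \<sigma> i / (2 ^ m * q)" for i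
  define w where "w i b = (if i \<in> S' then (if b then -q else q) else (if b then p else 1 - p))" for i b
  have m2: "(2::nat) ^ m = 2 * 2 ^ (m - 1)" using m1 by (metis Suc_diff_le diff_Suc_1 power_Suc)
  have tle: "t \<le> 2 ^ m" using tm m2 by simp
  have two_m: "(2::real) ^ m = real (2 ^ m)" by simp
  have ppos: "0 < p" using t1 pdef by simp
  have phalf: "p \<le> 1/2"
  proof -
    define M :: real where "M = 2 ^ (m - 1)"
    have Mp: "0 < M" by (simp add: M_def)
    have h: "real t \<le> M" unfolding M_def using tm by (metis of_nat_le_iff of_nat_numeral of_nat_power)
    have "(2::real) ^ m = 2 * M" unfolding M_def using m2 by (metis of_nat_numeral of_nat_power of_nat_mult numeral_times_numeral)
    then have "p = real t / (2 * M)" using pdef by simp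
    also have "\<dots> \<le> M / (2 * M)" using h Mp by (intro divide_right_mono) auto
    also have "\<dots> = 1/2" using Mp by simp
    finally show ?thesis .
  qed
  have p1: "0 < 1 - p" using phalf by simp
  have qpos: "0 < q" unfolding q_def using ppos p1 by simp
  have q2: "q ^ 2 = p * (1 - p)" unfolding q_def using ppos p1 by simp
  have sp_eq: "sp = p / q"
  proof -
    have "(p / q) ^ 2 = p ^ 2 / q ^ 2" by (simp add: power_divide)
    also have "\<dots> = p ^ 2 / (p * (1 - p))" using q2 by simp
    also have "\<dots> = p / (1 - p)" using ppos by (simp add: power2_eq_square)
    finally have "(p / q) ^ 2 = p / (1 - p)" .
    then show ?thesis unfolding sp_def by (rule real_sqrt_unique) (use ppos qpos in simp)
  qed
  have pa: "p * sqrt ((1 - p) / p) = q"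
  proof -
    have "(p * sqrt ((1 - p) / p)) ^ 2 = p ^ 2 * (sqrt ((1 - p) / p)) ^ 2" by (simp add: power_mult_distrib)
    also have "\<dots> = p ^ 2 * ((1 - p) / p)" using ppos p1 by simp
    also have "\<dots> = p * (1 - p)" using ppos by (simp add: power2_eq_square)
    finally have "(p * sqrt ((1 - p) / p)) ^ 2 = p * (1 - p)" .
    then show ?thesis unfolding q_def by (rule real_sqrt_unique[symmetric]) (use ppos p1 in simp)
  qed
  have pb: "(1 - p) * sqrt (p / (1 - p)) = q"
  proof -
    have "((1 - p) * sqrt (p / (1 - p))) ^ 2 = (1 - p) ^ 2 * (sqrt (p / (1 - p))) ^ 2" by (simp add: power_mult_distrib)
    also have "\<dots> = (1 - p) ^ 2 * (p / (1 - p))" using ppos p1 by simp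
    also have "\<dots> = p * (1 - p)" using p1 by (simp add: power2_eq_square)
    finally have "((1 - p) * sqrt (p / (1 - p))) ^ 2 = p * (1 - p)" .
    then show ?thesis unfolding q_def by (rule real_sqrt_unique[symmetric]) (use ppos p1 in simp)
  qed
  have S'sub: "S' \<subseteq> {1..n}" by (auto simp: S'_def blocksupp_def)
  have inS': "i \<in> S' \<longleftrightarrow> Jset m S i \<noteq> {}" if "i \<in> {1..n}" for i
  proof -
    have i1: "1 \<le> i" using that by simp
    have "i \<in> S' \<longleftrightarrow> card (Jset m S i) > 0" using that block_info(3)[OF i1, of m S] by (simp add: S'_def blocksupp_def)
    also have "\<dots> \<longleftrightarrow> Jset m S i \<noteq> {}" using block_info(1)[OF i1, of m S] by auto
    finally show ?thesis .
  qed
  have A0: "fourier (1/2) (m * n) (Red m t n f) S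
      = (1/2) ^ (m * n) * (\<Sum>Y\<in>Pow {1..m*n}. f {i\<in>{1..n}. hbit m t Y i} * (\<Prod>i\<in>{1..n}. v i (Y \<inter> blk m i)))"
    unfolding fourier_def sum_distrib_left
  proof (intro sum.cong refl)
    fix Y assume Y: "Y \<in> Pow {1..m*n}"
    have "card Y \<le> m * n" using Y card_mono[of "{1..m*n}" Y] by auto
    then have mu: "mu (1/2) (m * n) Y = (1/2) ^ (m * n)"
      unfolding mu_def by (simp add: power_add[symmetric])
    have ub: "ubasis (1/2) S Y = (-1) ^ card (S \<inter> Y)" by (simp add: ubasis_def)
    show "mu (1/2) (m * n) Y * Red m t n f Y * ubasis (1/2) S Y
        = (1/2) ^ (m * n) * (f {i\<in>{1..n}. hbit m t Y i} * (\<Prod>i\<in>{1..n}. v i (Y \<inter> blk m i)))"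
      unfolding mu ub sign_decomp[OF m1 Ssub, of Y] v_def Red_def by simp
  qed
  have A: "fourier (1/2) (m * n) (Red m t n f) S = (1/2) ^ (m * n) * (\<Sum>X\<in>Pow {1..n}. f X * (\<Prod>i\<in>{1..n}. cf m t v i (i\<in>X)))"
    unfolding A0 by (simp only: core[OF m1])
  have C: "(1/2) ^ m * cf m t v i b = (if i \<in> S' then r i else 1) * w i b" if i: "i \<in> {1..n}" for i b
  proof -
    have i1: "1 \<le> i" using i by simp
    define J where "J = Jset m S i"
    have cT: "cf m t v i True = \<sigma> i" unfolding v_def \<sigma>_def by (rule cf_true[OF i1])
    have cF: "cf m t v i False = (\<Sum>N<2^m-t. chi J N)" unfolding v_def J_def by (rule cf_false[OF i1])
    show ?thesis
    proof (cases "i \<in> S'")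
      case False
      then have J0: "J = {}" using inS'[OF i] by (simp add: J_def)
      have "\<sigma> i = real t" unfolding \<sigma>_def J_def[symmetric] J0 using tle by (simp add: chi_def)
      moreover have "cf m t v i False = real (2 ^ m - t)" unfolding cF J0 by (simp add: chi_def)
      ultimately show ?thesis using False cT tle pdef
        by (cases b) (simp_all add: w_def of_nat_diff field_simps)
    next
      case True
      then have Jne: "J \<noteq> {}" using inS'[OF i] by (simp add: J_def)
      have fin: "finite J" and sub: "J \<subseteq> {..<m}" using block_info[OF i1] by (auto simp: J_def)
      have j0J: "Min J \<in> J" using fin Jne by simp
      have mn: "\<forall>j\<in>J. Min J \<le> j" using fin by simp
      have lt: "\<forall>j\<in>J. j < m" using sub by auto
      have "cf m t v i False = - \<sigma> i"
        unfolding cF \<sigma>_def J_def[symmetric] by (rule sigma_props(2)[OF fin j0J mn lt tle t1])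
      then show ?thesis using True cT qpos
        by (cases b) (simp_all add: w_def r_def field_simps)
    qed
  qed
  have F: "fourier p n f S' = (\<Sum>X\<in>Pow {1..n}. f X * (\<Prod>i\<in>{1..n}. w i (i \<in> X)))"
    unfolding fourier_def
  proof (intro sum.cong refl)
    fix X assume X: "X \<in> Pow {1..n}"
    have "(\<Prod>i\<in>{1..n}. w i (i \<in> X)) = (\<Prod>i\<in>{1..n}. (if i \<in> X then p else 1 - p)
        * (if i \<in> S' then (if i \<in> X then - sqrt ((1 - p) / p) else sqrt (p / (1 - p))) else 1))"
      by (intro prod.cong refl) (simp add: w_def pa pb)
    also have "\<dots> = (\<Prod>i\<in>{1..n}. if i \<in> X then p else 1 - p)
        * (\<Prod>i\<in>{1..n}. if i \<in> S' then (if i \<in> X then - sqrt ((1 - p) / p) else sqrt (p / (1 - p))) else 1)"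
      by (rule prod.distrib)
    also have "(\<Prod>i\<in>{1..n}. if i \<in> X then p else 1 - p) = mu p n X"
    proof -
      have Xs: "X \<subseteq> {1..n}" using X by simp
      then have fX: "finite X" using finite_subset by blast
      have "{1..n} \<inter> X = X" using Xs by auto
      moreover have "card ({1..n} - X) = n - card X" using card_Diff_subset[OF fX Xs] by simp
      ultimately have "{1..n} \<inter> X = X" "card ({1..n} - X) = n - card X" by auto
      then show ?thesis by (simp add: prod_if_card mu_def)
    qed
    also have "(\<Prod>i\<in>{1..n}. if i \<in> S' then (if i \<in> X then - sqrt ((1 - p) / p) else sqrt (p / (1 - p))) else 1)
        = (\<Prod>i\<in>S'. if i \<in> X then - sqrt ((1 - p) / p) else sqrt (p / (1 - p)))"
    proof -
      have "{1..n} \<inter> S' = S'" using S'sub by auto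
      then show ?thesis using prod.inter_restrict[of "{1..n}" "\<lambda>i. if i \<in> X then - sqrt ((1 - p) / p) else sqrt (p / (1 - p))" S'] by simp
    qed
    also have "\<dots> = ubasis p S' X"
      using finite_subset[OF S'sub] by (simp add: prod_if_card ubasis_def)
    finally show "mu p n X * f X * ubasis p S' X = f X * (\<Prod>i\<in>{1..n}. w i (i \<in> X))" by simp
  qed
  have G: "fourier (1/2) (m * n) (Red m t n f) S = (\<Prod>i\<in>S'. r i) * fourier p n f S'"
  proof -
    have "(1/2::real) ^ (m * n) = (\<Prod>i\<in>{1..n}. (1/2) ^ m)" by (simp add: power_mult)
    then have "fourier (1/2) (m * n) (Red m t n f) S
        = (\<Sum>X\<in>Pow {1..n}. f X * (\<Prod>i\<in>{1..n}. (1/2) ^ m * cf m t v i (i\<in>X)))"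
      using A by (simp add: sum_distrib_left prod.distrib mult_ac)
    also have "\<dots> = (\<Sum>X\<in>Pow {1..n}. f X * ((\<Prod>i\<in>{1..n}. if i \<in> S' then r i else 1) * (\<Prod>i\<in>{1..n}. w i (i\<in>X))))"
      by (intro sum.cong refl) (simp add: C prod.distrib[symmetric])
    also have "(\<Prod>i\<in>{1..n}. if i \<in> S' then r i else 1) = (\<Prod>i\<in>S'. r i)"
    proof -
      have "{1..n} \<inter> S' = S'" using S'sub by auto
      then show ?thesis using prod.inter_restrict[of "{1..n}" r S'] by simp
    qed
    finally show ?thesis unfolding F by (simp add: sum_distrib_left mult_ac)
  qed
  have blkinfo: "finite (Jset m S i) \<and> Jset m S i \<noteq> {} \<and> Min (Jset m S i) \<in> Jset m S i
      \<and> (\<forall>j\<in>Jset m S i. Min (Jset m S i) \<le> j) \<and> (\<forall>j\<in>Jset m S i. j < m) \<and> Min (Jset m S i) < m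
      \<and> topidx m S i = m - Min (Jset m S i) \<and> card (block m S i) = card (Jset m S i)"
    if i: "i \<in> S'" for i
  proof -
    have iI: "i \<in> {1..n}" using i S'sub by auto
    then have i1: "1 \<le> i" by simp
    have ne: "Jset m S i \<noteq> {}" using inS'[OF iI] i by simp
    have fin: "finite (Jset m S i)" and sub: "Jset m S i \<subseteq> {..<m}" using block_info[OF i1] by auto
    have mJ: "Min (Jset m S i) \<in> Jset m S i" using fin ne by simp
    have "Min (Jset m S i) < m" using mJ sub by auto
    moreover have "\<forall>j\<in>Jset m S i. j < m" using sub by auto
    moreover have "\<forall>j\<in>Jset m S i. Min (Jset m S i) \<le> j" using fin by simp
    ultimately show ?thesis using fin ne mJ topidx_eq[OF i1 ne] block_info(3)[OF i1, of m S] by blast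
  qed
  have absr: "\<bar>r i\<bar> = real (acoef m t (topidx m S i)) / real t * sp" if i: "i \<in> S'" for i
  proof -
    define J where "J = Jset m S i"
    define j0 where "j0 = Min J"
    have fin: "finite J" and j0J: "j0 \<in> J" and mn: "\<forall>j\<in>J. j0 \<le> j" and lt: "\<forall>j\<in>J. j < m"
      and j0m: "j0 < m" and top: "topidx m S i = m - j0"
      using blkinfo[OF i] by (simp_all add: J_def j0_def)
    have "\<bar>\<sigma> i\<bar> = real (min (t mod 2 ^ Suc j0) (2 ^ Suc j0 - t mod 2 ^ Suc j0))"
      unfolding \<sigma>_def J_def[symmetric] by (rule sigma_props(3)[OF fin j0J mn lt tle t1])
    also have "\<dots> = real (acoef m t (topidx m S i))" unfolding top acoef_eq[OF j0m] ..
    finally have sa: "\<bar>\<sigma> i\<bar> = real (acoef m t (topidx m S i))" .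
    have "\<bar>r i\<bar> = \<bar>\<sigma> i\<bar> / (2 ^ m * q)" using qpos by (simp add: r_def abs_divide abs_mult)
    also have "\<dots> = real (acoef m t (topidx m S i)) / real t * sp"
      unfolding sa sp_eq pdef using t1 qpos by (simp add: field_simps)
    finally show ?thesis .
  qed
  have sgnr: "r i = - sp * (-1) ^ card (block m S i)"
    if i: "i \<in> S'" and cond: "int (topidx m S i) \<le> \<lfloor>log 2 (1 / p)\<rfloor>" for i
  proof -
    define J where "J = Jset m S i"
    define j0 where "j0 = Min J"
    have fin: "finite J" and j0J: "j0 \<in> J" and mn: "\<forall>j\<in>J. j0 \<le> j" and lt: "\<forall>j\<in>J. j < m"
      and j0m: "j0 < m" and top: "topidx m S i = m - j0" and cb: "card (block m S i) = card J"
      using blkinfo[OF i] by (simp_all add: J_def j0_def)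
    define s where "s = m - j0"
    have "real s \<le> log 2 (1 / p)" using cond unfolding top s_def[symmetric] by (simp add: le_floor_iff)
    then have "2 powr real s \<le> 1 / p" using le_log_iff[of 2 "1 / p" "real s"] ppos by simp
    then have "(2::real) ^ s \<le> 1 / p" by (simp add: powr_realpow)
    then have "(2::real) ^ s * p \<le> 1" using ppos by (simp add: field_simps)
    then have "(2::real) ^ s * real t \<le> 2 ^ m" unfolding pdef by (simp add: field_simps)
    moreover have "(2::real) ^ m = 2 ^ s * 2 ^ j0" unfolding s_def using j0m
      by (simp add: power_add[symmetric])
    ultimately have "real t \<le> 2 ^ j0" by simp
    then have tj: "t \<le> 2 ^ j0" by (metis of_nat_le_iff of_nat_numeral of_nat_power)
    have "\<sigma> i = (-1) ^ card J * real t"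
      unfolding \<sigma>_def J_def[symmetric] by (rule sigma_props(4)[OF fin j0J mn lt tle t1 tj])
    then show ?thesis unfolding r_def cb sp_eq pdef using qpos by (simp add: field_simps)
  qed
  have cardS: "card S = (\<Sum>i\<in>S'. card (block m S i))"
  proof -
    have "card S = (\<Sum>i\<in>{1..n}. card (S \<inter> blk m i))" by (rule card_decomp[OF m1 Ssub])
    also have "\<dots> = (\<Sum>i\<in>{1..n}. card (block m S i))" by (simp add: block_def blk_def)
    also have "\<dots> = (\<Sum>i\<in>{1..n}. if 0 < card (block m S i) then card (block m S i) else 0)"
      by (intro sum.cong refl) auto
    also have "\<dots> = (\<Sum>i\<in>S'. card (block m S i))"
      unfolding S'_def blocksupp_def by (rule sum.inter_filter[symmetric]) simp
    finally show ?thesis .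
  qed
  have finS': "finite S'" using finite_subset[OF S'sub] by simp
  have part1: "\<bar>fourier (1/2) (m * n) (Red m t n f) S\<bar>
      = (\<Prod>i\<in>S'. real (acoef m t (topidx m S i)) / real t) * sp ^ card S' * \<bar>fourier p n f S'\<bar>"
  proof -
    have "\<bar>fourier (1/2) (m * n) (Red m t n f) S\<bar> = (\<Prod>i\<in>S'. \<bar>r i\<bar>) * \<bar>fourier p n f S'\<bar>"
      unfolding G by (simp add: abs_mult abs_prod)
    also have "(\<Prod>i\<in>S'. \<bar>r i\<bar>) = (\<Prod>i\<in>S'. real (acoef m t (topidx m S i)) / real t * sp)"
      by (intro prod.cong refl) (rule absr)
    also have "\<dots> = (\<Prod>i\<in>S'. real (acoef m t (topidx m S i)) / real t) * sp ^ card S'"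
      by (simp only: prod.distrib prod_constant)
    finally show ?thesis .
  qed
  have part2: "fourier (1/2) (m * n) (Red m t n f) S = (- sp) ^ card S' * (-1) ^ card S * fourier p n f S'"
    if cond: "\<forall>i\<in>S'. int (topidx m S i) \<le> \<lfloor>log 2 (1 / p)\<rfloor>"
  proof -
    have "(\<Prod>i\<in>S'. r i) = (\<Prod>i\<in>S'. - sp * (-1) ^ card (block m S i))"
      using sgnr cond by (intro prod.cong refl) blast
    also have "\<dots> = (- sp) ^ card S' * (\<Prod>i\<in>S'. (-1) ^ card (block m S i))"
      by (simp only: prod.distrib prod_constant)
    also have "(\<Prod>i\<in>S'. (-1::real) ^ card (block m S i)) = (-1) ^ card S"
      unfolding cardS by (simp add: power_sum)
    finally show ?thesis unfolding G by simp
  qed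
  show ?thesis
    unfolding S'_def[symmetric] sp_def[symmetric] using part1 part2 by blast
qed

end
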